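(* Let $n\ge 3$ and let $\mathfrak{M}=(S,\mathcal{L})$ be a $\big(\binom{n+1}{2}_{\,n-1}\ \binom{n+1}{3}_{\,3}\big)$-configuration. Let $X_1\neq X_2$ be $n$-element subsets of $S$ such that $\mathfrak{M}$ freely contains the complete graphs $K_{X_1}$ and $K_{X_2}$ (these are complete graphs of maximal possible size freely contained in $\mathfrak{M}$), and let $Y_i=S\setminus X_i$, $i=1,2$. Then $Y_1\pitchfork Y_2:=(Y_1\cap Y_2)\cup\big((S\setminus Y_1)\cap(S\setminus Y_2)\big)$ is a hyperplane of $\mathfrak{M}$, and there is no set $C\subseteq S$ of pairwise collinear points of $\mathfrak{M}$ with $Y_1\pitchfork Y_2=S\setminus C$; i.e. $Y_1\pitchfork Y_2$ is not the complement of any complete subgraph of $\mathfrak{M}$.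
   Context: A $(v_r\ b_k)$-configuration is a partial linear space with $v$ points and $b$ lines, each point on exactly $r$ lines and each line containing exactly $k$ points. $\mathfrak{M}$ freely contains the complete graph $K_X$ ($X\subseteq S$) iff any two distinct points of $X$ are collinear, no three points of $X$ lie on a line, and for any disjoint $2$-subsets $\{a_1,a_2\},\{b_1,b_2\}$ of $X$ the line through $a_1,a_2$ and the line through $b_1,b_2$ are disjoint. A subspace is a set of points containing every line that meets it in at least two points; a hyperplane is a proper subspace meeting every line. *)

theory Defs
  imports Main
begin

text \<open>A (v_r b_k)-configuration: v points, b lines, each point on exactly r lines,
  each line has exactly k points, two distinct points on at most one line.\<close>

definition configuration :: "'a set \<Rightarrow> 'a set set \<Rightarrow> nat \<Rightarrow> nat \<Rightarrow> nat \<Rightarrow> nat \<Rightarrow> bool" where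
  "configuration S L v r b k \<longleftrightarrow>
     finite S \<and> card S = v \<and> finite L \<and> card L = b \<and>
     (\<forall>l\<in>L. l \<subseteq> S \<and> card l = k) \<and>
     (\<forall>p\<in>S. card {l\<in>L. p \<in> l} = r) \<and>
     (\<forall>p\<in>S. \<forall>q\<in>S. p \<noteq> q \<longrightarrow> (\<forall>l\<in>L. \<forall>m\<in>L. p \<in> l \<and> q \<in> l \<and> p \<in> m \<and> q \<in> m \<longrightarrow> l = m))"

definition collinear :: "'a set set \<Rightarrow> 'a \<Rightarrow> 'a \<Rightarrow> bool" where
  "collinear L p q \<longleftrightarrow> (\<exists>l\<in>L. p \<in> l \<and> q \<in> l)"

definition line_through :: "'a set set \<Rightarrow> 'a \<Rightarrow> 'a \<Rightarrow> 'a set" where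
  "line_through L p q = (THE l. l \<in> L \<and> p \<in> l \<and> q \<in> l)"

definition freely_contains_complete :: "'a set \<Rightarrow> 'a set set \<Rightarrow> 'a set \<Rightarrow> bool" where
  "freely_contains_complete S L X \<longleftrightarrow>
     X \<subseteq> S \<and>
     (\<forall>a\<in>X. \<forall>b\<in>X. a \<noteq> b \<longrightarrow> collinear L a b) \<and>
     (\<forall>l\<in>L. card (l \<inter> X) \<le> 2) \<and>
     (\<forall>a1\<in>X. \<forall>a2\<in>X. \<forall>b1\<in>X. \<forall>b2\<in>X.
        a1 \<noteq> a2 \<and> b1 \<noteq> b2 \<and> {a1, a2} \<inter> {b1, b2} = {} \<longrightarrow>
        line_through L a1 a2 \<inter> line_through L b1 b2 = {})"

definition subspace :: "'a set \<Rightarrow> 'a set set \<Rightarrow> 'a set \<Rightarrow> bool" where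
  "subspace S L H \<longleftrightarrow> H \<subseteq> S \<and> (\<forall>l\<in>L. 2 \<le> card (l \<inter> H) \<longrightarrow> l \<subseteq> H)"

definition hyperplane :: "'a set \<Rightarrow> 'a set set \<Rightarrow> 'a set \<Rightarrow> bool" where
  "hyperplane S L H \<longleftrightarrow> subspace S L H \<and> H \<noteq> S \<and> (\<forall>l\<in>L. l \<inter> H \<noteq> {})"

definition sym_pitchfork :: "'a set \<Rightarrow> 'a set \<Rightarrow> 'a set \<Rightarrow> 'a set" where
  "sym_pitchfork S Y1 Y2 = (Y1 \<inter> Y2) \<union> ((S - Y1) \<inter> (S - Y2))"

end

theory Submission
  imports Defs
begin
lemma line_eq:
  assumes "configuration S L v r b k" "l\<in>L" "m\<in>L" "p\<in>l" "q\<in>l" "p\<in>m" "q\<in>m" "p\<noteq>q"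
  shows "l = m"
proof -
  have "p \<in> S" "q \<in> S" using assms(1,2,4,5) unfolding configuration_def by blast+
  thus ?thesis using assms unfolding configuration_def by blast
qed
lemma lt_eq:
  assumes "configuration S L v r b k" "l\<in>L" "p\<in>l" "q\<in>l" "p\<noteq>q"
  shows "line_through L p q = l"
  unfolding line_through_def
  apply (rule the_equality)
  using assms apply blast
  using assms line_eq[OF assms(1)] by blast
lemma line3:
  assumes "configuration S L v r b 3" "l\<in>L"
  shows "\<exists>p q r. l = {p,q,r} \<and> p\<noteq>q \<and> q\<noteq>r \<and> p\<noteq>r"
  using assms unfolding configuration_def by (simp add: card_3_iff)
lemma K2:
  assumes "configuration S L v r b k" "freely_contains_complete S L X" "l\<in>L"
    "x\<in>l" "y\<in>l" "z\<in>l" "x\<in>X" "y\<in>X" "z\<in>X" "x\<noteq>y" "y\<noteq>z" "x\<noteq>z"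
  shows False
proof -
  have "finite S" using assms(1) unfolding configuration_def by blast
  moreover have "l \<subseteq> S" using assms(1,3) unfolding configuration_def by blast
  ultimately have fin: "finite (l \<inter> X)" by (meson finite_Int finite_subset)
  have "{x,y,z} \<subseteq> l \<inter> X" using assms(4-9) by blast
  hence "card {x,y,z} \<le> card (l \<inter> X)" using fin card_mono by blast
  moreover have "card (l \<inter> X) \<le> 2" using assms(2,3) unfolding freely_contains_complete_def by blast
  ultimately show False using assms(10-12) by simp
qed

lemma K1:
  assumes conf: "configuration S L v (n-1) b 3" and fr: "freely_contains_complete S L X"
    and cX: "card X = n" and n3: "n \<ge> 3" and l: "l\<in>L" "x\<in>l" "x\<in>X"
  shows "\<exists>y\<in>X. y\<in>l \<and> y\<noteq>x"
proof (rule ccontr)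
  assume nex: "\<not> ?thesis"
  have XS: "X \<subseteq> S" and clq: "\<forall>a\<in>X. \<forall>b\<in>X. a \<noteq> b \<longrightarrow> collinear L a b"
    using fr unfolding freely_contains_complete_def by auto
  have xS: "x \<in> S" using XS l by blast
  have finL: "finite L" using conf unfolding configuration_def by blast
  have cr: "card {m\<in>L. x\<in>m} = n - 1" using conf xS unfolding configuration_def by blast
  have "\<forall>y\<in>X-{x}. \<exists>m\<in>L. x\<in>m \<and> y\<in>m"
    using clq l(3) unfolding collinear_def by blast
  then obtain f where f: "\<And>y. y\<in>X-{x} \<Longrightarrow> f y \<in> L \<and> x \<in> f y \<and> y \<in> f y" by metis
  have maps: "f ` (X-{x}) \<subseteq> {m\<in>L. x\<in>m} - {l}"
  proof
    fix m assume "m \<in> f ` (X-{x})"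
    then obtain y where y: "y \<in> X-{x}" "m = f y" by blast
    have "y \<notin> l" using nex y(1) by blast
    thus "m \<in> {m\<in>L. x\<in>m} - {l}" using f[OF y(1)] y(2) by blast
  qed
  have inj: "inj_on f (X-{x})"
  proof (rule inj_onI)
    fix y z assume yz: "y\<in>X-{x}" "z\<in>X-{x}" "f y = f z"
    show "y = z"
    proof (rule ccontr)
      assume "y \<noteq> z"
      moreover have "f y \<in> L" "x \<in> f y" "y \<in> f y" "z \<in> f y" using f yz by auto
      ultimately show False using K2[OF conf fr, of "f y" x y z] yz l(3) by blast
    qed
  qed
  have "card (X-{x}) \<le> card ({m\<in>L. x\<in>m} - {l})"
    using card_inj_on_le[OF inj maps] finL by simp
  moreover have "card (X-{x}) = n - 1" using cX l n3 by (simp add: card_Diff_singleton_if)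
  moreover have "card ({m\<in>L. x\<in>m} - {l}) = n - 2" using cr l by (simp add: card_Diff_singleton_if)
  ultimately show False using n3 by simp
qed
lemma G:
  assumes conf: "configuration S L v (n-1) b 3" and fr: "freely_contains_complete S L X"
    and cX: "card X = n" and n3: "n \<ge> 3"
    and a: "a\<in>X" "a'\<in>X" "a\<noteq>a'" and x: "x \<notin> X"
    and m: "m\<in>L" "a\<in>m" "x\<in>m" and m': "m'\<in>L" "a'\<in>m'" "x\<in>m'"
  shows "a' \<in> m"
proof -
  obtain c where c: "c\<in>X" "c\<in>m" "c\<noteq>a" using K1[OF conf fr cX n3 m(1,2) a(1)] by blast
  obtain c' where c': "c'\<in>X" "c'\<in>m'" "c'\<noteq>a'" using K1[OF conf fr cX n3 m'(1,2) a(2)] by blast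
  have xa: "x \<noteq> a" "x \<noteq> a'" "x \<noteq> c" "x \<noteq> c'" using x a c c' by auto
  show ?thesis
  proof (cases "c = a'")
    case True thus ?thesis using c by simp
  next
    case ca: False
    show ?thesis
    proof (cases "c' = a")
      case True
      hence "a \<in> m'" using c' by simp
      hence "m = m'" using line_eq[OF conf m(1) m'(1) m(2) m(3) _ m'(3)] xa by blast
      thus ?thesis using m' by simp
    next
      case ca': False
      show ?thesis
      proof (cases "c = c'")
        case True
        hence "c \<in> m'" using c' by simp
        hence "m = m'" using line_eq[OF conf m(1) m'(1) c(2) m(3) _ m'(3)] xa by blast
        thus ?thesis using m' by simp
      next
        case cc: False
        have disj: "\<forall>a1\<in>X. \<forall>a2\<in>X. \<forall>b1\<in>X. \<forall>b2\<in>X.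
          a1 \<noteq> a2 \<and> b1 \<noteq> b2 \<and> {a1, a2} \<inter> {b1, b2} = {} \<longrightarrow>
          line_through L a1 a2 \<inter> line_through L b1 b2 = {}"
          using fr unfolding freely_contains_complete_def by (elim conjE)
        have "{a, c} \<inter> {a', c'} = {}" using a c c' ca ca' cc by auto
        hence "line_through L a c \<inter> line_through L a' c' = {}"
          using disj a c c' by (metis)
        moreover have "line_through L a c = m" using lt_eq[OF conf m(1) m(2) c(2)] c by auto
        moreover have "line_through L a' c' = m'" using lt_eq[OF conf m'(1) m'(2) c'(2)] c' by auto
        ultimately show ?thesis using m m' by blast
      qed
    qed
  qed
qed

lemma Dprops:
  assumes conf: "configuration S L v (n-1) b 3" and fr1: "freely_contains_complete S L X1"
    and fr2: "freely_contains_complete S L X2"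
    and c1: "card X1 = n" and c2: "card X2 = n" and n3: "n \<ge> 3" and l: "l \<in> L"
  defines "D \<equiv> (X1 - X2) \<union> (X2 - X1)"
  shows "(\<forall>u\<in>l. \<forall>v\<in>l. \<forall>w\<in>l. u\<in>D \<and> v\<in>D \<and> w\<in>D \<longrightarrow> u=v \<or> v=w \<or> u=w)
     \<and> (l \<inter> D = {} \<or> (\<exists>u. l - D \<subseteq> {u}))"
proof -
  obtain p q r where pqr: "l = {p,q,r}" "p\<noteq>q" "q\<noteq>r" "p\<noteq>r" using line3[OF conf l] by blast
  have k1: "\<forall>z\<in>l. z\<in>X1 \<longrightarrow> (\<exists>y\<in>X1. y\<in>l \<and> y\<noteq>z)"
    using K1[OF conf fr1 c1 n3 l] by blast
  have k1': "\<forall>z\<in>l. z\<in>X2 \<longrightarrow> (\<exists>y\<in>X2. y\<in>l \<and> y\<noteq>z)"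
    using K1[OF conf fr2 c2 n3 l] by blast
  have k2: "\<not>(p\<in>X1\<and>q\<in>X1\<and>r\<in>X1)" using K2[OF conf fr1 l, of p q r] pqr by auto
  have k2': "\<not>(p\<in>X2\<and>q\<in>X2\<and>r\<in>X2)" using K2[OF conf fr2 l, of p q r] pqr by auto
  have A: "p\<in>X1 \<longrightarrow> q\<in>X1 \<or> r\<in>X1" "q\<in>X1 \<longrightarrow> p\<in>X1 \<or> r\<in>X1" "r\<in>X1 \<longrightarrow> q\<in>X1 \<or> p\<in>X1"
    using k1 pqr by auto
  have B: "p\<in>X2 \<longrightarrow> q\<in>X2 \<or> r\<in>X2" "q\<in>X2 \<longrightarrow> p\<in>X2 \<or> r\<in>X2" "r\<in>X2 \<longrightarrow> q\<in>X2 \<or> p\<in>X2"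
    using k1' pqr by auto
  have P1: "\<not> (p\<in>D \<and> q\<in>D \<and> r\<in>D)" unfolding D_def using A B k2 k2' by blast
  have P2: "(p\<notin>D \<and> q\<notin>D \<and> r\<notin>D) \<or> (p\<in>D \<and> q\<in>D) \<or> (p\<in>D \<and> r\<in>D) \<or> (q\<in>D \<and> r\<in>D)"
    unfolding D_def using A B k2 k2' by blast
  have "\<forall>u\<in>l. \<forall>v\<in>l. \<forall>w\<in>l. u\<in>D \<and> v\<in>D \<and> w\<in>D \<longrightarrow> u=v \<or> v=w \<or> u=w"
    unfolding pqr(1) using P1 by blast
  moreover have "l \<inter> D = {} \<or> (\<exists>u. l - D \<subseteq> {u})"
  proof -
    { assume "p\<notin>D \<and> q\<notin>D \<and> r\<notin>D" hence ?thesis unfolding pqr(1) by blast }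
    moreover { assume "p\<in>D \<and> q\<in>D" hence "l - D \<subseteq> {r}" unfolding pqr(1) by blast hence ?thesis by blast }
    moreover { assume "p\<in>D \<and> r\<in>D" hence "l - D \<subseteq> {q}" unfolding pqr(1) by blast hence ?thesis by blast }
    moreover { assume "q\<in>D \<and> r\<in>D" hence "l - D \<subseteq> {p}" unfolding pqr(1) by blast hence ?thesis by blast }
    ultimately show ?thesis using P2 by blast
  qed
  ultimately show ?thesis by blast
qed
theorem proposition1p8:
  fixes S :: "'a set" and L :: "'a set set" and n :: nat and X1 X2 :: "'a set"
  assumes "n \<ge> 3"
    and "configuration S L ((n + 1) choose 2) (n - 1) ((n + 1) choose 3) 3"
    and "X1 \<subseteq> S" and "X2 \<subseteq> S" and "card X1 = n" and "card X2 = n" and "X1 \<noteq> X2"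
    and "freely_contains_complete S L X1" and "freely_contains_complete S L X2"
  shows "hyperplane S L (sym_pitchfork S (S - X1) (S - X2))
    \<and> \<not> (\<exists>C\<subseteq>S. (\<forall>a\<in>C. \<forall>b\<in>C. a \<noteq> b \<longrightarrow> collinear L a b)
                 \<and> sym_pitchfork S (S - X1) (S - X2) = S - C)"
proof -
  note n3 = assms(1) and conf = assms(2) and fr1 = assms(8) and fr2 = assms(9)
  define D where "D = (X1 - X2) \<union> (X2 - X1)"
  have DS: "D \<subseteq> S" using assms(3,4) unfolding D_def by blast
  have H: "sym_pitchfork S (S - X1) (S - X2) = S - D"
    unfolding sym_pitchfork_def D_def using assms(3,4) by blast
  have DP: "\<And>l. l \<in> L \<Longrightarrow> (\<forall>u\<in>l. \<forall>v\<in>l. \<forall>w\<in>l. u\<in>D \<and> v\<in>D \<and> w\<in>D \<longrightarrow> u=v \<or> v=w \<or> u=w)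
     \<and> (l \<inter> D = {} \<or> (\<exists>u. l - D \<subseteq> {u}))"
    unfolding D_def by (rule Dprops[OF conf fr1 fr2 assms(5,6) n3])
  have finS: "finite S" using conf unfolding configuration_def by blast
  have lS: "\<And>l. l \<in> L \<Longrightarrow> l \<subseteq> S" using conf unfolding configuration_def by blast
  have fX1: "finite X1" "finite X2" using finS assms(3,4) finite_subset by auto
  have ne21: "X2 - X1 \<noteq> {}"
  proof
    assume "X2 - X1 = {}"
    hence "X2 \<subseteq> X1" by blast
    hence "X2 = X1" using card_subset_eq[OF fX1(1)] assms(5,6) by simp
    thus False using assms(7) by simp
  qed
  have hyp: "hyperplane S L (S - D)"
    unfolding hyperplane_def subspace_def
  proof (intro conjI ballI impI)
    show "S - D \<subseteq> S" by blast
    show "S - D \<noteq> S" using ne21 DS unfolding D_def by blast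
  next
    fix l assume l: "l \<in> L" and c2: "2 \<le> card (l \<inter> (S - D))"
    show "l \<subseteq> S - D"
    proof (cases "l \<inter> D = {}")
      case True thus ?thesis using lS[OF l] by blast
    next
      case False
      then obtain u where "l - D \<subseteq> {u}" using DP[OF l] by blast
      hence "l \<inter> (S - D) \<subseteq> {u}" by blast
      hence "card (l \<inter> (S - D)) \<le> card {u}" by (meson card_mono finite.emptyI finite.insertI)
      thus ?thesis using c2 by simp
    qed
  next
    fix l assume l: "l \<in> L"
    obtain p q r where pqr: "l = {p,q,r}" "p\<noteq>q" "q\<noteq>r" "p\<noteq>r" using line3[OF conf l] by blast
    show "l \<inter> (S - D) \<noteq> {}"
    proof
      assume "l \<inter> (S - D) = {}"
      hence "p \<in> D" "q \<in> D" "r \<in> D" using lS[OF l] pqr(1) by blast+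
      moreover have "\<forall>u\<in>l. \<forall>v\<in>l. \<forall>w\<in>l. u\<in>D \<and> v\<in>D \<and> w\<in>D \<longrightarrow> u=v \<or> v=w \<or> u=w"
        using DP[OF l] by (elim conjE)
      ultimately show False using pqr by (metis insertCI)
    qed
  qed
  have notc: "\<not> (\<forall>a\<in>D. \<forall>b\<in>D. a \<noteq> b \<longrightarrow> collinear L a b)"
  proof
    assume dc: "\<forall>a\<in>D. \<forall>b\<in>D. a \<noteq> b \<longrightarrow> collinear L a b"
    obtain x where x: "x \<in> X2" "x \<notin> X1" using ne21 by blast
    have clq2: "\<forall>a\<in>X2. \<forall>b\<in>X2. a \<noteq> b \<longrightarrow> collinear L a b"
      using fr2 unfolding freely_contains_complete_def by (elim conjE)
    have A0: "\<forall>y\<in>X1 \<inter> X2. \<forall>y'\<in>X1 \<inter> X2. y = y'"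
    proof (intro ballI, rule ccontr)
      fix y y' assume y: "y \<in> X1 \<inter> X2" "y' \<in> X1 \<inter> X2" "y \<noteq> y'"
      have y1: "y \<in> X1" "y' \<in> X1" "y \<in> X2" "y' \<in> X2" using y(1,2) by auto
      have xy: "x \<noteq> y" "x \<noteq> y'" using x(2) y1(1,2) by auto
      have "collinear L y x" using clq2 x(1) y1(3) xy(1) by metis
      then obtain m where m: "m\<in>L" "y\<in>m" "x\<in>m" unfolding collinear_def by blast
      have "collinear L y' x" using clq2 x(1) y1(4) xy(2) by metis
      then obtain m' where m': "m'\<in>L" "y'\<in>m'" "x\<in>m'" unfolding collinear_def by blast
      have ym: "y' \<in> m" using G[OF conf fr1 assms(5) n3 y1(1) y1(2) y(3) x(2) m m'] .
      show False using K2[OF conf fr2 m(1) m(2) ym m(3) y1(3) y1(4) x(1) y(3)] xy by simp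
    qed
    have A1: "card (X1 \<inter> X2) \<le> Suc 0"
      using fX1 A0 by (simp add: card_le_Suc0_iff_eq)
    have "card (X1 - X2) = card X1 - card (X1 \<inter> X2)"
      using fX1 by (simp add: card_Diff_subset_Int)
    hence c12: "2 \<le> card (X1 - X2)" using A1 assms(5) n3 by simp
    hence "X1 - X2 \<noteq> {}" by (intro notI) simp
    then obtain a where a: "a \<in> X1 - X2" by blast
    have "card (X1 - X2 - {a}) \<ge> 1" using c12 a fX1 by (simp add: card_Diff_singleton_if)
    hence "X1 - X2 - {a} \<noteq> {}" by (intro notI) simp
    then obtain a' where a': "a' \<in> X1 - X2" "a' \<noteq> a" by blast
    have aD: "a \<in> D" "a' \<in> D" "x \<in> D" using a a' x unfolding D_def by blast+
    have ax: "a \<noteq> x" "a' \<noteq> x" using a a' x by auto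
    have "collinear L a x" using dc aD ax by blast
    then obtain m where m: "m\<in>L" "a\<in>m" "x\<in>m" unfolding collinear_def by blast
    have "collinear L a' x" using dc aD ax by blast
    then obtain m' where m': "m'\<in>L" "a'\<in>m'" "x\<in>m'" unfolding collinear_def by blast
    have a1: "a \<in> X1" "a' \<in> X1" using a a' by auto
    have "a' \<in> m" using G[OF conf fr1 assms(5) n3 a1(1) a1(2) _ x(2) m m'] a'(2) by metis
    have "\<forall>u\<in>m. \<forall>v\<in>m. \<forall>w\<in>m. u\<in>D \<and> v\<in>D \<and> w\<in>D \<longrightarrow> u=v \<or> v=w \<or> u=w"
      using DP[OF m(1)] by (elim conjE)
    thus False using m \<open>a' \<in> m\<close> aD ax a'(2) by metis
  qed
  show ?thesis
  proof (intro conjI)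
    show "hyperplane S L (sym_pitchfork S (S - X1) (S - X2))" using hyp H by simp
    show "\<not> (\<exists>C\<subseteq>S. (\<forall>a\<in>C. \<forall>b\<in>C. a \<noteq> b \<longrightarrow> collinear L a b)
                 \<and> sym_pitchfork S (S - X1) (S - X2) = S - C)"
    proof
      assume "\<exists>C\<subseteq>S. (\<forall>a\<in>C. \<forall>b\<in>C. a \<noteq> b \<longrightarrow> collinear L a b)
                 \<and> sym_pitchfork S (S - X1) (S - X2) = S - C"
      then obtain C where C: "C \<subseteq> S" "\<forall>a\<in>C. \<forall>b\<in>C. a \<noteq> b \<longrightarrow> collinear L a b" "S - D = S - C"
        using H by auto
      have "C = D" using C(1,3) DS by blast
      thus False using notc C(2) by simp
    qed
  qed
qed
end
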